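(* Let $G$ be a finite bipartite graph and let $e_1=\{b_1,w_1\},\dots,e_n=\{b_n,w_n\}$ be pairwise vertex-disjoint edges, with $b_i$ black and $w_i$ white. Let $G^e=G-\{e_1,\dots,e_n\}$ (edges deleted) and $G'=G-\{b_1,w_1,\dots,b_n,w_n\}$ (vertices deleted). Suppose that for every $i$ there is a nonempty channel $B_i\in\mathcal{C}_B(G^e)$ with $B_i\cap\{b_1,\dots,b_n\}\subseteq\{b_i\}$. Then $m_G\equiv m_{G'}\pmod 2$. If moreover $B_i\cap\{b_1,\dots,b_n\}=\{b_i\}$ for all $i$, then $|\mathcal{C}_B(G)|=|\mathcal{C}_B(G')|$.
   Context: $m_H$ is the number of perfect matchings of $H$. A channel of a graph $H$ is a vertex set $C$ such that every vertex of $H$ is adjacent to an even number of vertices of $C$ (empty set included). For bipartite $H$ with black/white coloring, $\mathcal{C}_B(H)$ is the set of channels consisting only of black vertices. *)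

theory Defs
  imports Main
begin

definition simple_graph :: "'a set \<Rightarrow> 'a set set \<Rightarrow> bool" where
  "simple_graph V E \<longleftrightarrow> finite V \<and> (\<forall>e\<in>E. \<exists>x y. x \<in> V \<and> y \<in> V \<and> x \<noteq> y \<and> e = {x, y})"

definition bipartite_graph :: "'a set \<Rightarrow> 'a set set \<Rightarrow> 'a set \<Rightarrow> 'a set \<Rightarrow> bool" where
  "bipartite_graph V E Bl Wh \<longleftrightarrow> simple_graph V E \<and> Bl \<inter> Wh = {} \<and> Bl \<union> Wh = V \<and>
     (\<forall>e\<in>E. \<exists>x\<in>Bl. \<exists>y\<in>Wh. e = {x, y})"

definition perfect_matchings :: "'a set \<Rightarrow> 'a set set \<Rightarrow> 'a set set set" where
  "perfect_matchings V E = {M. M \<subseteq> E \<and> (\<forall>v\<in>V. \<exists>!e. e \<in> M \<and> v \<in> e)}"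

definition num_pm :: "'a set \<Rightarrow> 'a set set \<Rightarrow> nat" where
  "num_pm V E = card (perfect_matchings V E)"

definition channel :: "'a set \<Rightarrow> 'a set set \<Rightarrow> 'a set \<Rightarrow> bool" where
  "channel V E C \<longleftrightarrow> C \<subseteq> V \<and> (\<forall>v\<in>V. even (card {u \<in> C. {u, v} \<in> E}))"

definition black_channels :: "'a set \<Rightarrow> 'a set set \<Rightarrow> 'a set \<Rightarrow> 'a set set" where
  "black_channels V E Bl = {C. C \<subseteq> Bl \<and> channel V E C}"

definition del_vertices_edges :: "'a set set \<Rightarrow> 'a set \<Rightarrow> 'a set set" where
  "del_vertices_edges E S = {e \<in> E. e \<inter> S = {}}"

end

theory Submission
  imports Defs "HOL-Library.FuncSet"
begin

lemma even_card_involution: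
  assumes "finite S" "\<And>x. x \<in> S \<Longrightarrow> g x \<in> S" "\<And>x. x \<in> S \<Longrightarrow> g (g x) = x"
    "\<And>x. x \<in> S \<Longrightarrow> g x \<noteq> x"
  shows "even (card S)"
  using assms
proof (induction "card S" arbitrary: S rule: less_induct)
  case less
  note fin = less.prems(1) and gS = less.prems(2) and gg = less.prems(3) and gn = less.prems(4)
  show ?case
  proof (cases "S = {}")
    case True then show ?thesis by simp
  next
    case False
    then obtain x where x: "x \<in> S" by auto
    let ?S' = "S - {x, g x}"
    have gx: "g x \<in> S" "g x \<noteq> x" using gS gn x by auto
    have sub: "{x, g x} \<subseteq> S" using x gx by auto
    have c2: "card {x, g x} = 2" using gx by simp
    have "card {x, g x} \<le> card S" using card_mono[OF fin sub] .
    moreover have "card ?S' = card S - card {x, g x}"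
      using sub fin by (intro card_Diff_subset) (auto intro: finite_subset)
    ultimately have c: "card S = card ?S' + 2" using c2 by simp
    have "even (card ?S')"
    proof (rule less.hyps)
      show "card ?S' < card S" using c by simp
      show "finite ?S'" using fin by simp
      fix y assume y: "y \<in> ?S'"
      then have yS: "y \<in> S" "y \<noteq> x" "y \<noteq> g x" by auto
      have "g y \<noteq> x" using gg[OF yS(1)] yS by metis
      moreover have "g y \<noteq> g x" using gg[OF x] gg[OF yS(1)] yS by metis
      ultimately show "g y \<in> ?S'" using gS[OF yS(1)] by simp
      show "g (g y) = y" using gg yS by simp
      show "g y \<noteq> y" using gn yS by simp
    qed
    then show ?thesis using c by simp
  qed
qed

definition pset :: "'a set \<Rightarrow> 'a set \<Rightarrow> ('a \<Rightarrow> 'a set) \<Rightarrow> ('a \<Rightarrow> 'a) set" where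
 "pset Bs Ws N = {f \<in> Bs \<rightarrow>\<^sub>E Ws. bij_betw f Bs Ws \<and> (\<forall>v\<in>Bs. f v \<in> N v)}"

definition pcount :: "'a set \<Rightarrow> 'a set \<Rightarrow> ('a \<Rightarrow> 'a set) \<Rightarrow> nat" where
  "pcount Bs Ws N = card (pset Bs Ws N)"

lemma pset_finite: "finite Bs \<Longrightarrow> finite Ws \<Longrightarrow> finite (pset Bs Ws N)"
  unfolding pset_def by (rule finite_subset[of _ "Bs \<rightarrow>\<^sub>E Ws"]) (auto intro: finite_PiE)

lemma pcount_cong: "(\<And>v. v\<in>Bs \<Longrightarrow> N v \<inter> Ws = N' v \<inter> Ws) \<Longrightarrow> pcount Bs Ws N = pcount Bs Ws N'"
  unfolding pcount_def pset_def
proof (intro arg_cong[where f=card] Collect_cong conj_cong refl)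
  fix f assume h: "\<And>v. v\<in>Bs \<Longrightarrow> N v \<inter> Ws = N' v \<inter> Ws" and f: "f \<in> Bs \<rightarrow>\<^sub>E Ws"
  show "(\<forall>v\<in>Bs. f v \<in> N v) = (\<forall>v\<in>Bs. f v \<in> N' v)"
  proof (intro ball_cong refl)
    fix v assume v: "v \<in> Bs"
    then have "f v \<in> Ws" using f by auto
    then show "(f v \<in> N v) = (f v \<in> N' v)" using h[OF v] by blast
  qed
qed

lemma pset_fiber:
  assumes b0: "b0 \<in> Bs" and x: "x \<in> Ws" "x \<in> N b0"
  shows "{f \<in> pset Bs Ws N. f b0 = x} = (\<lambda>g. g(b0 := x)) ` pset (Bs - {b0}) (Ws - {x}) N"
proof
  show "{f \<in> pset Bs Ws N. f b0 = x} \<subseteq> (\<lambda>g. g(b0 := x)) ` pset (Bs - {b0}) (Ws - {x}) N"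
  proof
    fix f assume f: "f \<in> {f \<in> pset Bs Ws N. f b0 = x}"
    let ?g = "f(b0 := undefined)"
    have "f = ?g(b0 := x)" using f by auto
    moreover have "?g \<in> pset (Bs - {b0}) (Ws - {x}) N"
    proof -
      have bf: "bij_betw f Bs Ws" and fe: "f \<in> Bs \<rightarrow>\<^sub>E Ws" and fn: "\<forall>v\<in>Bs. f v \<in> N v" and fb: "f b0 = x"
        using f unfolding pset_def by auto
      have "bij_betw f (Bs - {b0}) (Ws - {x})"
        by (rule bij_betw_DiffI[OF bf]) (use b0 x fb in auto)
      moreover have "bij_betw f (Bs - {b0}) (Ws - {x}) = bij_betw ?g (Bs - {b0}) (Ws - {x})"
        by (rule bij_betw_cong) simp
      ultimately have "bij_betw ?g (Bs - {b0}) (Ws - {x})" by simp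
      moreover have "?g \<in> (Bs - {b0}) \<rightarrow>\<^sub>E (Ws - {x})"
        using fe \<open>bij_betw f (Bs - {b0}) (Ws - {x})\<close> by (auto simp: PiE_iff bij_betw_def)
      ultimately show ?thesis using fn unfolding pset_def by auto
    qed
    ultimately show "f \<in> (\<lambda>g. g(b0 := x)) ` pset (Bs - {b0}) (Ws - {x}) N" by blast
  qed
next
  show "(\<lambda>g. g(b0 := x)) ` pset (Bs - {b0}) (Ws - {x}) N \<subseteq> {f \<in> pset Bs Ws N. f b0 = x}"
  proof
    fix f assume "f \<in> (\<lambda>g. g(b0 := x)) ` pset (Bs - {b0}) (Ws - {x}) N"
    then obtain g where g: "g \<in> pset (Bs - {b0}) (Ws - {x}) N" and f: "f = g(b0 := x)" by auto
    have bg: "bij_betw g (Bs - {b0}) (Ws - {x})" and ge: "g \<in> (Bs - {b0}) \<rightarrow>\<^sub>E (Ws - {x})"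
      and gn: "\<forall>v\<in>Bs - {b0}. g v \<in> N v" using g unfolding pset_def by auto
    have "bij_betw f (Bs - {b0}) (Ws - {x}) = bij_betw g (Bs - {b0}) (Ws - {x})"
      by (rule bij_betw_cong) (simp add: f)
    then have "bij_betw f (Bs - {b0}) (Ws - {x})" using bg by simp
    moreover have "bij_betw f {b0} {x}" using f by auto
    ultimately have "bij_betw f ((Bs - {b0}) \<union> {b0}) ((Ws - {x}) \<union> {x})"
      by (rule bij_betw_combine) auto
    moreover have "(Bs - {b0}) \<union> {b0} = Bs" "(Ws - {x}) \<union> {x} = Ws" using b0 x by auto
    ultimately have "bij_betw f Bs Ws" by simp
    moreover have "f \<in> Bs \<rightarrow>\<^sub>E Ws" using ge f b0 x by (auto simp: PiE_iff extensional_def)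
    moreover have "\<forall>v\<in>Bs. f v \<in> N v" using gn f x by auto
    ultimately show "f \<in> {f \<in> pset Bs Ws N. f b0 = x}" using f unfolding pset_def by auto
  qed
qed

lemma pcount_expand:
  assumes b0: "b0 \<in> Bs" and fin: "finite Bs" "finite Ws"
  shows "pcount Bs Ws N = (\<Sum>x\<in>Ws \<inter> N b0. pcount (Bs - {b0}) (Ws - {x}) N)"
proof -
  have mem: "f b0 \<in> Ws \<inter> N b0" if "f \<in> pset Bs Ws N" for f
    using that b0 unfolding pset_def by (auto dest: PiE_mem)
  have eq: "pset Bs Ws N = (\<Union>x\<in>Ws \<inter> N b0. {f \<in> pset Bs Ws N. f b0 = x})"
    using mem by blast
  have "card (\<Union>x\<in>Ws \<inter> N b0. {f \<in> pset Bs Ws N. f b0 = x}) = (\<Sum>x\<in>Ws \<inter> N b0. card {f \<in> pset Bs Ws N. f b0 = x})"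
    by (rule card_UN_disjoint) (use pset_finite[OF fin, of N] fin in auto)
  moreover have "pcount Bs Ws N = card (\<Union>x\<in>Ws \<inter> N b0. {f \<in> pset Bs Ws N. f b0 = x})"
    unfolding pcount_def by (rule arg_cong[where f=card, OF eq])
  ultimately have "pcount Bs Ws N = (\<Sum>x\<in>Ws \<inter> N b0. card {f \<in> pset Bs Ws N. f b0 = x})"
    by simp
  also have "\<dots> = (\<Sum>x\<in>Ws \<inter> N b0. pcount (Bs - {b0}) (Ws - {x}) N)"
  proof (rule sum.cong[OF refl])
    fix x assume x: "x \<in> Ws \<inter> N b0"
    have "inj_on (\<lambda>g. g(b0 := x)) (pset (Bs - {b0}) (Ws - {x}) N)"
    proof (rule inj_onI)
      fix g h assume g: "g \<in> pset (Bs - {b0}) (Ws - {x}) N" and h: "h \<in> pset (Bs - {b0}) (Ws - {x}) N"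
        and gh: "g(b0 := x) = h(b0 := x)"
      have ge: "g \<in> (Bs - {b0}) \<rightarrow>\<^sub>E (Ws - {x})" and he: "h \<in> (Bs - {b0}) \<rightarrow>\<^sub>E (Ws - {x})"
        using g h unfolding pset_def by auto
      have "g b0 = undefined" "h b0 = undefined"
        using PiE_arb[OF ge] PiE_arb[OF he] by auto
      show "g = h"
      proof
        fix y show "g y = h y"
        proof (cases "y = b0")
          case True then show ?thesis using \<open>g b0 = undefined\<close> \<open>h b0 = undefined\<close> by simp
        next
          case False
          have "(g(b0 := x)) y = (h(b0 := x)) y" using gh by simp
          then show ?thesis using False by simp
        qed
      qed
    qed
    then have "card ((\<lambda>g. g(b0 := x)) ` pset (Bs - {b0}) (Ws - {x}) N) = pcount (Bs - {b0}) (Ws - {x}) N"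
      unfolding pcount_def by (rule card_image)
    moreover have "{f \<in> pset Bs Ws N. f b0 = x} = (\<lambda>g. g(b0 := x)) ` pset (Bs - {b0}) (Ws - {x}) N"
      using x by (intro pset_fiber[OF b0]) auto
    ultimately show "card {f \<in> pset Bs Ws N. f b0 = x} = pcount (Bs - {b0}) (Ws - {x}) N" by simp
  qed
  finally show ?thesis .
qed

lemma pcount_twin_even:
  assumes "u \<in> Bs" "b0 \<in> Bs" "u \<noteq> b0" "N b0 \<inter> Ws = N u \<inter> Ws" "finite Bs" "finite Ws"
  shows "even (pcount Bs Ws N)"
  unfolding pcount_def
proof (rule even_card_involution[where g = "\<lambda>f. f(b0 := f u, u := f b0)"])
  show "finite (pset Bs Ws N)" using assms pset_finite by auto
  fix f assume f: "f \<in> pset Bs Ws N"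
  have bf: "bij_betw f Bs Ws" and fe: "f \<in> Bs \<rightarrow>\<^sub>E Ws" and fn: "\<forall>v\<in>Bs. f v \<in> N v"
    using f unfolding pset_def by auto
  have "inj_on f Bs" using bf by (simp add: bij_betw_def)
  then have neq: "f u \<noteq> f b0" using assms(1-3) by (metis inj_onD)
  show "(\<lambda>f. f(b0 := f u, u := f b0)) ((\<lambda>f. f(b0 := f u, u := f b0)) f) = f"
    using assms(3) by (intro ext) simp
  have bu: "b0 \<noteq> u" using assms(3) by blast
  have v: "(f(b0 := f u, u := f b0)) b0 = f u" using bu by simp
  show "(\<lambda>f. f(b0 := f u, u := f b0)) f \<noteq> f"
  proof
    assume "(\<lambda>f. f(b0 := f u, u := f b0)) f = f"
    then have "(f(b0 := f u, u := f b0)) b0 = f b0" by (rule fun_cong)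
    then show False using v neq by simp
  qed
  let ?s = "id(b0 := u, u := b0)"
  have "f(b0 := f u, u := f b0) = f \<circ> ?s" using assms(3) by (intro ext) auto
  moreover have "bij_betw ?s Bs Bs"
    by (rule bij_betw_byWitness[where f' = ?s]) (use assms(1-3) in auto)
  ultimately have bij': "bij_betw (f(b0 := f u, u := f b0)) Bs Ws"
    using bij_betw_trans[of ?s Bs Bs f Ws] bf by simp
  have "f u \<in> N u \<inter> Ws" "f b0 \<in> N b0 \<inter> Ws"
    using fn fe assms(1,2) by (auto dest: PiE_mem)
  then have fu: "f u \<in> N b0" "f b0 \<in> N u" using assms(4) by blast+
  have "f(b0 := f u, u := f b0) \<in> Bs \<rightarrow>\<^sub>E Ws"
    using fe assms(1,2) by (intro PiE_I) (auto simp: PiE_iff extensional_def)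
  then show "(\<lambda>f. f(b0 := f u, u := f b0)) f \<in> pset Bs Ws N"
    using bij' fu fn unfolding pset_def by simp
qed


lemma pcount_dep_even:
  assumes fin: "finite Bs" "finite Ws" and BB: "B \<subseteq> Bs" "B \<noteq> {}"
    and par: "\<forall>x\<in>Ws. even (card {u\<in>B. x \<in> N u})"
  shows "even (pcount Bs Ws N)"
proof -
  obtain b0 where b0: "b0 \<in> B" using BB by auto
  have finB: "finite B" using BB fin finite_subset by blast
  define c where "c x = pcount (Bs - {b0}) (Ws - {x}) N" for x
  have S: "(\<Sum>x\<in>Ws \<inter> N u. c x) = pcount Bs Ws (N(b0 := N u))" if u: "u \<in> B" for u
  proof -
    have "pcount Bs Ws (N(b0 := N u)) = (\<Sum>x\<in>Ws \<inter> (N(b0 := N u)) b0. pcount (Bs - {b0}) (Ws - {x}) (N(b0 := N u)))"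
      using b0 BB fin by (intro pcount_expand) auto
    also have "\<dots> = (\<Sum>x\<in>Ws \<inter> N u. c x)"
      unfolding c_def by (intro sum.cong refl pcount_cong) auto
    finally show ?thesis by simp
  qed
  have ev_u: "even (\<Sum>x\<in>Ws \<inter> N u. c x)" if u: "u \<in> B - {b0}" for u
  proof -
    have "even (pcount Bs Ws (N(b0 := N u)))"
      using u b0 BB fin by (intro pcount_twin_even[of u Bs b0]) auto
    then show ?thesis using S u by simp
  qed
  have inner: "(\<Sum>x\<in>Ws \<inter> N u. c x) = (\<Sum>x\<in>Ws. if x \<in> N u then c x else 0)" for u
    using fin(2) by (rule sum.inter_restrict)
  have inner2: "(\<Sum>u\<in>B. if x \<in> N u then c x else 0) = card {u\<in>B. x \<in> N u} * c x" for x
  proof -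
    have "(\<Sum>u\<in>B. if x \<in> N u then c x else 0) = (\<Sum>u\<in>{u\<in>B. x \<in> N u}. c x)"
      using finB by (rule sum.inter_filter[symmetric])
    then show ?thesis by simp
  qed
  have tot: "(\<Sum>u\<in>B. \<Sum>x\<in>Ws \<inter> N u. c x) = (\<Sum>x\<in>Ws. card {u\<in>B. x \<in> N u} * c x)"
  proof -
    have "(\<Sum>u\<in>B. \<Sum>x\<in>Ws. if x \<in> N u then c x else 0) = (\<Sum>x\<in>Ws. \<Sum>u\<in>B. if x \<in> N u then c x else 0)"
      by (rule sum.swap)
    then show ?thesis unfolding inner inner2 .
  qed
  have "even (\<Sum>x\<in>Ws. card {u\<in>B. x \<in> N u} * c x)"
    using par by (intro dvd_sum) auto
  then have evtot: "even (\<Sum>u\<in>B. \<Sum>x\<in>Ws \<inter> N u. c x)" using tot by simp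
  have "(\<Sum>u\<in>B. \<Sum>x\<in>Ws \<inter> N u. c x) = (\<Sum>x\<in>Ws \<inter> N b0. c x) + (\<Sum>u\<in>B - {b0}. \<Sum>x\<in>Ws \<inter> N u. c x)"
    using finB b0 by (rule sum.remove)
  moreover have "even (\<Sum>u\<in>B - {b0}. \<Sum>x\<in>Ws \<inter> N u. c x)"
    by (rule dvd_sum) (use ev_u in blast)
  ultimately have "even (\<Sum>x\<in>Ws \<inter> N b0. c x)" using evtot by simp
  moreover have "pcount Bs Ws N = (\<Sum>x\<in>Ws \<inter> N b0. c x)"
    unfolding c_def using b0 BB fin by (intro pcount_expand) auto
  ultimately show ?thesis by simp
qed

lemma pcount_edge:
  assumes fin: "finite Bs" "finite Ws" and b: "b \<in> Bs" and w: "w \<in> Ws" "w \<in> N b"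
    and BB: "B \<subseteq> Bs" "B \<noteq> {}"
    and par: "\<forall>x\<in>Ws. even (card {u\<in>B. x \<in> (N(b := N b - {w})) u})"
  shows "pcount Bs Ws N mod 2 = pcount (Bs - {b}) (Ws - {w}) N mod 2"
proof -
  let ?N' = "N(b := N b - {w})"
  define c where "c x = pcount (Bs - {b}) (Ws - {x}) N" for x
  have e1: "pcount Bs Ws N = (\<Sum>x\<in>Ws \<inter> N b. c x)"
    unfolding c_def using b fin by (rule pcount_expand)
  have ins: "Ws \<inter> N b = insert w (Ws \<inter> ?N' b)" "w \<notin> Ws \<inter> ?N' b" using w by auto
  have e2: "(\<Sum>x\<in>Ws \<inter> N b. c x) = c w + (\<Sum>x\<in>Ws \<inter> ?N' b. c x)"
    unfolding ins(1) using ins(2) fin by (subst sum.insert) auto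
  have e3: "pcount Bs Ws ?N' = (\<Sum>x\<in>Ws \<inter> ?N' b. c x)"
  proof -
    have "pcount Bs Ws ?N' = (\<Sum>x\<in>Ws \<inter> ?N' b. pcount (Bs - {b}) (Ws - {x}) ?N')"
      using b fin by (rule pcount_expand)
    also have "\<dots> = (\<Sum>x\<in>Ws \<inter> ?N' b. c x)"
      unfolding c_def by (intro sum.cong refl pcount_cong) auto
    finally show ?thesis .
  qed
  have "even (pcount Bs Ws ?N')" using fin BB par by (rule pcount_dep_even)
  then obtain k where "pcount Bs Ws ?N' = 2 * k" by (auto elim: evenE)
  then show ?thesis using e1 e2 e3 unfolding c_def by simp
qed


lemma even_shift: "(s::nat) + 2 * k = t \<Longrightarrow> even s \<longleftrightarrow> even t"
  by presburger

lemma card_sd: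
  assumes "finite A" "finite B"
  shows "card ((A - B) \<union> (B - A)) + 2 * card (A \<inter> B) = card A + card B"
proof -
  have "card ((A - B) \<union> (B - A)) = card (A - B) + card (B - A)"
    using assms by (intro card_Un_disjoint) auto
  moreover have "card A = card (A - B) + card (A \<inter> B)"
    using card_Int_Diff[OF assms(1), of B] by simp
  moreover have "card B = card (B - A) + card (A \<inter> B)"
    using card_Int_Diff[OF assms(2), of A] by (simp add: Int_commute)
  ultimately show ?thesis by simp
qed

lemma even_card_sd:
  assumes "finite X" "finite Y"
  shows "even (card {u \<in> (X - Y) \<union> (Y - X). P u}) \<longleftrightarrow>
         (even (card {u\<in>X. P u}) \<longleftrightarrow> even (card {u\<in>Y. P u}))"
proof -
  have e: "{u \<in> (X - Y) \<union> (Y - X). P u} = ({u\<in>X. P u} - {u\<in>Y. P u}) \<union> ({u\<in>Y. P u} - {u\<in>X. P u})"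
    by auto
  have "card {u \<in> (X - Y) \<union> (Y - X). P u} + 2 * card ({u\<in>X. P u} \<inter> {u\<in>Y. P u})
        = card {u\<in>X. P u} + card {u\<in>Y. P u}"
    unfolding e using assms by (intro card_sd) auto
  then have "even (card {u \<in> (X - Y) \<union> (Y - X). P u}) \<longleftrightarrow> even (card {u\<in>X. P u} + card {u\<in>Y. P u})"
    by (rule even_shift)
  then show ?thesis by simp
qed

definition kern :: "('a \<Rightarrow> 'a set) \<Rightarrow> 'a set \<Rightarrow> 'a set \<Rightarrow> 'a set \<Rightarrow> bool" where
  "kern N Bs Ws C \<longleftrightarrow> C \<subseteq> Bs \<and> (\<forall>x\<in>Ws. even (card {u\<in>C. x \<in> N u}))"

lemma kern_edge:
  assumes fin: "finite Bs" "finite Ws" and b: "b \<in> Bs" and w: "w \<in> Ws" "w \<in> N b"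
    and BB: "B \<subseteq> Bs" "b \<in> B"
    and par: "\<forall>x\<in>Ws. even (card {u\<in>B. x \<in> (N(b := N b - {w})) u})"
  shows "card {C. kern N Bs Ws C} = card {D. kern N (Bs - {b}) (Ws - {w}) D}"
proof -
  have finB: "finite B" using BB fin finite_subset by blast
  have pne: "even (card {u\<in>B. x \<in> N u})" if "x \<in> Ws" "x \<noteq> w" for x
  proof -
    have "{u\<in>B. x \<in> N u} = {u\<in>B. x \<in> (N(b := N b - {w})) u}" using that by auto
    then show ?thesis using par that by simp
  qed
  have pw: "odd (card {u\<in>B. w \<in> N u})"
  proof -
    have "{u\<in>B. w \<in> N u} = insert b {u\<in>B. w \<in> (N(b := N b - {w})) u}" using w BB by auto
    moreover have "b \<notin> {u\<in>B. w \<in> (N(b := N b - {w})) u}" by simp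
    moreover have "finite {u\<in>B. w \<in> (N(b := N b - {w})) u}" using finB by simp
    ultimately show ?thesis using par w by simp
  qed
  define sd where "sd X = (X - B) \<union> (B - X)" for X
  have sdsd: "sd (sd X) = X" for X unfolding sd_def by auto
  have esd: "even (card {u\<in>sd X. x \<in> N u}) \<longleftrightarrow> (even (card {u\<in>X. x \<in> N u}) \<longleftrightarrow> even (card {u\<in>B. x \<in> N u}))"
    if "finite X" for X x unfolding sd_def using that finB by (rule even_card_sd)
  define \<phi> where "\<phi> C = (if b \<in> C then sd C else C)" for C
  define \<psi> where "\<psi> D = (if odd (card {u\<in>D. w \<in> N u}) then sd D else D)" for D
  have fsub: "finite X" if "X \<subseteq> Bs" for X using that fin finite_subset by blast
  have "bij_betw \<phi> {C. kern N Bs Ws C} {D. kern N (Bs - {b}) (Ws - {w}) D}"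
  proof (rule bij_betw_byWitness[where f' = \<psi>])
    show "\<forall>C\<in>{C. kern N Bs Ws C}. \<psi> (\<phi> C) = C"
    proof
      fix C assume "C \<in> {C. kern N Bs Ws C}"
      then have C: "C \<subseteq> Bs" "\<forall>x\<in>Ws. even (card {u\<in>C. x \<in> N u})" unfolding kern_def by auto
      show "\<psi> (\<phi> C) = C"
      proof (cases "b \<in> C")
        case True
        have "odd (card {u\<in>sd C. w \<in> N u})" using esd[OF fsub[OF C(1)], of w] C(2) w pw by auto
        then show ?thesis using True sdsd unfolding \<phi>_def \<psi>_def by simp
      next
        case False
        then show ?thesis using C(2) w unfolding \<phi>_def \<psi>_def by simp
      qed
    qed
    show "\<forall>D\<in>{D. kern N (Bs - {b}) (Ws - {w}) D}. \<phi> (\<psi> D) = D"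
    proof
      fix D assume "D \<in> {D. kern N (Bs - {b}) (Ws - {w}) D}"
      then have D: "D \<subseteq> Bs - {b}" unfolding kern_def by auto
      show "\<phi> (\<psi> D) = D"
      proof (cases "odd (card {u\<in>D. w \<in> N u})")
        case True
        have "b \<in> sd D" using D BB unfolding sd_def by auto
        then show ?thesis using True sdsd unfolding \<phi>_def \<psi>_def by simp
      next
        case False
        then show ?thesis using D unfolding \<phi>_def \<psi>_def by auto
      qed
    qed
    show "\<phi> ` {C. kern N Bs Ws C} \<subseteq> {D. kern N (Bs - {b}) (Ws - {w}) D}"
    proof
      fix D assume "D \<in> \<phi> ` {C. kern N Bs Ws C}"
      then obtain C where C: "C \<subseteq> Bs" "\<forall>x\<in>Ws. even (card {u\<in>C. x \<in> N u})" and DC: "D = \<phi> C"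
        unfolding kern_def by auto
      show "D \<in> {D. kern N (Bs - {b}) (Ws - {w}) D}"
      proof (cases "b \<in> C")
        case True
        have "sd C \<subseteq> Bs - {b}" using C(1) BB True unfolding sd_def by auto
        moreover have "even (card {u\<in>sd C. x \<in> N u})" if "x \<in> Ws - {w}" for x
          using esd[OF fsub[OF C(1)], of x] C(2) pne that by auto
        ultimately show ?thesis using True DC unfolding \<phi>_def kern_def by simp
      next
        case False
        then show ?thesis using C DC unfolding \<phi>_def kern_def by auto
      qed
    qed
    show "\<psi> ` {D. kern N (Bs - {b}) (Ws - {w}) D} \<subseteq> {C. kern N Bs Ws C}"
    proof
      fix C assume "C \<in> \<psi> ` {D. kern N (Bs - {b}) (Ws - {w}) D}"
      then obtain D where D: "D \<subseteq> Bs - {b}" "\<forall>x\<in>Ws - {w}. even (card {u\<in>D. x \<in> N u})" and CD: "C = \<psi> D"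
        unfolding kern_def by auto
      have fD: "finite D" using D(1) fsub by blast
      show "C \<in> {C. kern N Bs Ws C}"
      proof (cases "odd (card {u\<in>D. w \<in> N u})")
        case True
        have "sd D \<subseteq> Bs" using D(1) BB unfolding sd_def by auto
        moreover have "even (card {u\<in>sd D. x \<in> N u})" if "x \<in> Ws" for x
        proof (cases "x = w")
          case True
          then show ?thesis using esd[OF fD, of x] pw \<open>odd (card {u\<in>D. w \<in> N u})\<close> by auto
        next
          case False
          then show ?thesis using esd[OF fD, of x] pne[of x] D(2) that by auto
        qed
        ultimately show ?thesis using True CD unfolding \<psi>_def kern_def by simp
      next
        case False
        have "even (card {u\<in>D. x \<in> N u})" if "x \<in> Ws" for x
          using False D(2) that by (cases "x = w") auto
        then show ?thesis using False D(1) CD unfolding \<psi>_def kern_def by auto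
      qed
    qed
  qed
  then show ?thesis by (rule bij_betw_same_card)
qed


lemma pcount_multi:
  fixes b w :: "nat \<Rightarrow> 'a" and B :: "nat \<Rightarrow> 'a set"
  assumes "finite Bs" "finite Ws"
    and "\<forall>i<n. b i \<in> Bs \<and> w i \<in> Ws \<and> w i \<in> N (b i)"
    and "inj_on b {..<n}" "inj_on w {..<n}"
    and "\<forall>i<n. B i \<subseteq> Bs \<and> B i \<noteq> {} \<and> B i \<inter> b ` {..<n} \<subseteq> {b i} \<and>
           (\<forall>x\<in>Ws. even (card {u\<in>B i. x \<in> (N(b i := N (b i) - {w i})) u}))"
  shows "pcount Bs Ws N mod 2 = pcount (Bs - b ` {..<n}) (Ws - w ` {..<n}) N mod 2"
  using assms
proof (induction n arbitrary: Bs Ws)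
  case 0
  then show ?case by simp
next
  case (Suc n)
  have bn: "b n \<in> Bs" "w n \<in> Ws" "w n \<in> N (b n)" using Suc.prems(3) by auto
  have Bn: "B n \<subseteq> Bs" "B n \<noteq> {}"
    "\<forall>x\<in>Ws. even (card {u\<in>B n. x \<in> (N(b n := N (b n) - {w n})) u})"
    using Suc.prems(6) by auto
  have step: "pcount Bs Ws N mod 2 = pcount (Bs - {b n}) (Ws - {w n}) N mod 2"
    using Suc.prems(1,2) bn Bn by (rule pcount_edge)
  have bne: "b i \<noteq> b n" "w i \<noteq> w n" if "i < n" for i
    using Suc.prems(4,5) that by (auto dest: inj_onD)
  have IH: "pcount (Bs - {b n}) (Ws - {w n}) N mod 2
      = pcount (Bs - {b n} - b ` {..<n}) (Ws - {w n} - w ` {..<n}) N mod 2"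
  proof (rule Suc.IH)
    show "finite (Bs - {b n})" "finite (Ws - {w n})" using Suc.prems by auto
    show "\<forall>i<n. b i \<in> Bs - {b n} \<and> w i \<in> Ws - {w n} \<and> w i \<in> N (b i)"
      using Suc.prems(3) bne by auto
    show "inj_on b {..<n}" "inj_on w {..<n}" using Suc.prems(4,5) by (auto intro: inj_on_subset)
    show "\<forall>i<n. B i \<subseteq> Bs - {b n} \<and> B i \<noteq> {} \<and> B i \<inter> b ` {..<n} \<subseteq> {b i} \<and>
           (\<forall>x\<in>Ws - {w n}. even (card {u\<in>B i. x \<in> (N(b i := N (b i) - {w i})) u}))"
    proof (intro allI impI)
      fix i assume i: "i < n"
      have h: "B i \<subseteq> Bs" "B i \<noteq> {}" "B i \<inter> b ` {..<Suc n} \<subseteq> {b i}"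
        "\<forall>x\<in>Ws. even (card {u\<in>B i. x \<in> (N(b i := N (b i) - {w i})) u})"
        using Suc.prems(6) i by auto
      have "b n \<notin> B i" using h(3) bne[OF i] by auto
      moreover have "B i \<inter> b ` {..<n} \<subseteq> {b i}" using h(3) by auto
      ultimately show "B i \<subseteq> Bs - {b n} \<and> B i \<noteq> {} \<and> B i \<inter> b ` {..<n} \<subseteq> {b i} \<and>
           (\<forall>x\<in>Ws - {w n}. even (card {u\<in>B i. x \<in> (N(b i := N (b i) - {w i})) u}))"
        using h by auto
    qed
  qed
  have "Bs - {b n} - b ` {..<n} = Bs - b ` {..<Suc n}" "Ws - {w n} - w ` {..<n} = Ws - w ` {..<Suc n}"
    by (auto simp: lessThan_Suc)
  then show ?case using step IH by simp
qed

lemma kern_multi: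
  fixes b w :: "nat \<Rightarrow> 'a" and B :: "nat \<Rightarrow> 'a set"
  assumes "finite Bs" "finite Ws"
    and "\<forall>i<n. b i \<in> Bs \<and> w i \<in> Ws \<and> w i \<in> N (b i)"
    and "inj_on b {..<n}" "inj_on w {..<n}"
    and "\<forall>i<n. B i \<subseteq> Bs \<and> b i \<in> B i \<and> B i \<inter> b ` {..<n} \<subseteq> {b i} \<and>
           (\<forall>x\<in>Ws. even (card {u\<in>B i. x \<in> (N(b i := N (b i) - {w i})) u}))"
  shows "card {C. kern N Bs Ws C} = card {C. kern N (Bs - b ` {..<n}) (Ws - w ` {..<n}) C}"
  using assms
proof (induction n arbitrary: Bs Ws)
  case 0
  then show ?case by simp
next
  case (Suc n)
  have bn: "b n \<in> Bs" "w n \<in> Ws" "w n \<in> N (b n)" using Suc.prems(3) by auto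
  have Bn: "B n \<subseteq> Bs" "b n \<in> B n"
    "\<forall>x\<in>Ws. even (card {u\<in>B n. x \<in> (N(b n := N (b n) - {w n})) u})"
    using Suc.prems(6) by auto
  have step: "card {C. kern N Bs Ws C} = card {C. kern N (Bs - {b n}) (Ws - {w n}) C}"
    using Suc.prems(1,2) bn Bn by (rule kern_edge)
  have bne: "b i \<noteq> b n" "w i \<noteq> w n" if "i < n" for i
    using Suc.prems(4,5) that by (auto dest: inj_onD)
  have IH: "card {C. kern N (Bs - {b n}) (Ws - {w n}) C}
      = card {C. kern N (Bs - {b n} - b ` {..<n}) (Ws - {w n} - w ` {..<n}) C}"
  proof (rule Suc.IH)
    show "finite (Bs - {b n})" "finite (Ws - {w n})" using Suc.prems by auto
    show "\<forall>i<n. b i \<in> Bs - {b n} \<and> w i \<in> Ws - {w n} \<and> w i \<in> N (b i)"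
      using Suc.prems(3) bne by auto
    show "inj_on b {..<n}" "inj_on w {..<n}" using Suc.prems(4,5) by (auto intro: inj_on_subset)
    show "\<forall>i<n. B i \<subseteq> Bs - {b n} \<and> b i \<in> B i \<and> B i \<inter> b ` {..<n} \<subseteq> {b i} \<and>
           (\<forall>x\<in>Ws - {w n}. even (card {u\<in>B i. x \<in> (N(b i := N (b i) - {w i})) u}))"
    proof (intro allI impI)
      fix i assume i: "i < n"
      have h: "B i \<subseteq> Bs" "b i \<in> B i" "B i \<inter> b ` {..<Suc n} \<subseteq> {b i}"
        "\<forall>x\<in>Ws. even (card {u\<in>B i. x \<in> (N(b i := N (b i) - {w i})) u})"
        using Suc.prems(6) i by auto
      have "b n \<notin> B i" using h(3) bne[OF i] by auto
      moreover have "B i \<inter> b ` {..<n} \<subseteq> {b i}" using h(3) by auto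
      ultimately show "B i \<subseteq> Bs - {b n} \<and> b i \<in> B i \<and> B i \<inter> b ` {..<n} \<subseteq> {b i} \<and>
           (\<forall>x\<in>Ws - {w n}. even (card {u\<in>B i. x \<in> (N(b i := N (b i) - {w i})) u}))"
        using h by auto
    qed
  qed
  have "Bs - {b n} - b ` {..<n} = Bs - b ` {..<Suc n}" "Ws - {w n} - w ` {..<n} = Ws - w ` {..<Suc n}"
    by (auto simp: lessThan_Suc)
  then show ?case using step IH by simp
qed


definition nb :: "'a set set \<Rightarrow> 'a \<Rightarrow> 'a set" where
  "nb E u = {x. {u, x} \<in> E}"

lemma kern_cong:
  assumes "\<And>u. u \<in> C \<Longrightarrow> N1 u \<inter> Ws = N2 u \<inter> Ws"
  shows "kern N1 Bs Ws C = kern N2 Bs Ws C"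
proof -
  have "{u\<in>C. x \<in> N1 u} = {u\<in>C. x \<in> N2 u}" if "x \<in> Ws" for x
    using assms that by blast
  then show ?thesis unfolding kern_def by auto
qed

lemma kern_cong2:
  assumes "\<And>u. u \<in> Bs \<Longrightarrow> N1 u \<inter> Ws = N2 u \<inter> Ws"
  shows "kern N1 Bs Ws C = kern N2 Bs Ws C"
proof (cases "C \<subseteq> Bs")
  case True
  then show ?thesis using assms by (intro kern_cong) auto
next
  case False
  then show ?thesis unfolding kern_def by auto
qed

lemma edge_bw:
  assumes "bipartite_graph V E Bl Wh" "{u, v} \<in> E" "u \<in> Bl"
  shows "v \<in> Wh" "v \<notin> Bl" "u \<notin> Wh"
proof -
  obtain x y where xy: "x \<in> Bl" "y \<in> Wh" "{u, v} = {x, y}"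
    using assms(1,2) unfolding bipartite_graph_def by blast
  have d: "Bl \<inter> Wh = {}" using assms(1) unfolding bipartite_graph_def by auto
  from xy(3) have "(u = x \<and> v = y) \<or> (u = y \<and> v = x)" by (auto simp: doubleton_eq_iff)
  then show "v \<in> Wh" "v \<notin> Bl" "u \<notin> Wh" using xy d assms(3) by auto
qed

lemma edge_split:
  assumes "bipartite_graph V E Bl Wh" "e \<in> E"
  obtains p q where "p \<in> Bl" "q \<in> Wh" "e = {p, q}"
  using assms unfolding bipartite_graph_def by blast

lemma bip_facts:
  assumes "bipartite_graph V E Bl Wh"
  shows "finite V" "Bl \<inter> Wh = {}" "Bl \<union> Wh = V" "finite Bl" "finite Wh"
  using assms unfolding bipartite_graph_def simple_graph_def by auto

lemma channels_kern:
  assumes bip: "bipartite_graph V E Bl Wh"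
  shows "black_channels V E Bl = {C. kern (nb E) Bl Wh C}"
proof -
  note bf = bip_facts[OF bip]
  have "C \<in> black_channels V E Bl \<longleftrightarrow> kern (nb E) Bl Wh C" for C
  proof (cases "C \<subseteq> Bl")
    case False
    then show ?thesis unfolding black_channels_def kern_def by auto
  next
    case True
    have e1: "{u \<in> C. {u, v} \<in> E} = {}" if "v \<in> Bl" for v
      using edge_bw(2)[OF bip _ ] True that by blast
    have e2: "{u \<in> C. {u, v} \<in> E} = {u\<in>C. v \<in> nb E u}" for v
      unfolding nb_def by (auto simp: insert_commute)
    have e3: "{u\<in>C. v \<in> nb E u} = {}" if "v \<in> Bl" for v using e1[OF that] e2[of v] by simp
    have bp: "\<forall>v\<in>Bl. even (card {u\<in>C. v \<in> nb E u})"
    proof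
      fix v assume "v \<in> Bl"
      then have "{u\<in>C. v \<in> nb E u} = {}" by (rule e3)
      then show "even (card {u\<in>C. v \<in> nb E u})" by (simp only: card.empty even_zero)
    qed
    have "channel V E C \<longleftrightarrow> (\<forall>v\<in>Wh. even (card {u\<in>C. v \<in> nb E u}))"
      unfolding channel_def e2 bf(3)[symmetric] using True bp by auto
    then show ?thesis using True unfolding black_channels_def kern_def by auto
  qed
  then show ?thesis by auto
qed

lemma num_pm_pcount:
  assumes bip: "bipartite_graph V E Bl Wh"
  shows "num_pm V E = pcount Bl Wh (nb E)"
proof -
  note bf = bip_facts[OF bip]
  define \<Phi> where "\<Phi> f = (\<lambda>v. {v, f v}) ` Bl" for f :: "'a \<Rightarrow> 'a"
  let ?F = "pset Bl Wh (nb E)"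
  have inj: "inj_on \<Phi> ?F"
  proof (rule inj_onI)
    fix f g assume f: "f \<in> ?F" and g: "g \<in> ?F" and fg: "\<Phi> f = \<Phi> g"
    have fe: "f \<in> Bl \<rightarrow>\<^sub>E Wh" and ge: "g \<in> Bl \<rightarrow>\<^sub>E Wh" using f g unfolding pset_def by auto
    show "f = g"
    proof
      fix x show "f x = g x"
      proof (cases "x \<in> Bl")
        case True
        have "{x, f x} \<in> \<Phi> g" using fg True unfolding \<Phi>_def by auto
        then obtain v where v: "v \<in> Bl" "{x, f x} = {v, g v}" unfolding \<Phi>_def by auto
        have "g v \<in> Wh" using ge v(1) by (auto dest: PiE_mem)
        then have "x \<noteq> g v" using True bf(2) by auto
        then show ?thesis using v(2) by (auto simp: doubleton_eq_iff)
      next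
        case False
        then show ?thesis using PiE_arb[OF fe] PiE_arb[OF ge] by simp
      qed
    qed
  qed
  have img: "\<Phi> ` ?F = perfect_matchings V E"
  proof
    show "\<Phi> ` ?F \<subseteq> perfect_matchings V E"
    proof
      fix M assume "M \<in> \<Phi> ` ?F"
      then obtain f where f: "f \<in> ?F" and M: "M = \<Phi> f" by auto
      have fe: "f \<in> Bl \<rightarrow>\<^sub>E Wh" and fb: "bij_betw f Bl Wh"
        and fn: "\<forall>v\<in>Bl. f v \<in> nb E v" using f unfolding pset_def by auto
      have fW: "f v \<in> Wh" if "v \<in> Bl" for v using fe that by (auto dest: PiE_mem)
      have finj: "inj_on f Bl" and fim: "f ` Bl = Wh" using fb unfolding bij_betw_def by auto
      have "M \<subseteq> E" using fn unfolding M \<Phi>_def nb_def by auto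
      moreover have "\<exists>!e. e \<in> M \<and> v \<in> e" if v: "v \<in> V" for v
      proof (cases "v \<in> Bl")
        case True
        show ?thesis
        proof (rule ex1I[where a = "{v, f v}"])
          show "{v, f v} \<in> M \<and> v \<in> {v, f v}" using True unfolding M \<Phi>_def by auto
          fix e assume e: "e \<in> M \<and> v \<in> e"
          then obtain v' where v': "v' \<in> Bl" "e = {v', f v'}" unfolding M \<Phi>_def by auto
          have "v \<noteq> f v'" using fW[OF v'(1)] True bf(2) by auto
          then have "v = v'" using e v' by auto
          then show "e = {v, f v}" using v' by simp
        qed
      next
        case False
        then have vW: "v \<in> Wh" using v bf(3) by auto
        then obtain v0 where v0: "v0 \<in> Bl" "f v0 = v" using fim by auto
        show ?thesis
        proof (rule ex1I[where a = "{v0, v}"])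
          show "{v0, v} \<in> M \<and> v \<in> {v0, v}" using v0 unfolding M \<Phi>_def by auto
          fix e assume e: "e \<in> M \<and> v \<in> e"
          then obtain v' where v': "v' \<in> Bl" "e = {v', f v'}" unfolding M \<Phi>_def by auto
          have "v \<noteq> v'" using v'(1) False by auto
          then have "v = f v'" using e v' by auto
          then have "v' = v0" using finj v0 v'(1) by (auto dest: inj_onD)
          then show "e = {v0, v}" using v' \<open>v = f v'\<close> by simp
        qed
      qed
      ultimately show "M \<in> perfect_matchings V E" unfolding perfect_matchings_def by auto
    qed
  next
    show "perfect_matchings V E \<subseteq> \<Phi> ` ?F"
    proof
      fix M assume "M \<in> perfect_matchings V E"
      then have ME: "M \<subseteq> E" and uniq: "\<And>v. v \<in> V \<Longrightarrow> \<exists>!e. e \<in> M \<and> v \<in> e"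
        unfolding perfect_matchings_def by auto
      have ex: "\<exists>x. {v, x} \<in> M" if v: "v \<in> Bl" for v
      proof -
        obtain e where e: "e \<in> M" "v \<in> e" using uniq[of v] v bf(3) by auto
        obtain p q where pq: "p \<in> Bl" "q \<in> Wh" "e = {p, q}" using edge_split[OF bip] e ME by blast
        have "v \<noteq> q" using pq v bf(2) by auto
        then have "v = p" using e pq by auto
        then show ?thesis using e pq by auto
      qed
      have un: "x = y" if v: "v \<in> Bl" and "{v, x} \<in> M" "{v, y} \<in> M" for v x y
      proof -
        have "{v, x} = {v, y}" using uniq[of v] v bf(3) that(2,3) by auto
        then show ?thesis by (auto simp: doubleton_eq_iff)
      qed
      have ex1: "\<exists>!x. {v, x} \<in> M" if "v \<in> Bl" for v using ex un that by blast
      define f where "f = (\<lambda>v\<in>Bl. THE x. {v, x} \<in> M)"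
      have fM: "{v, f v} \<in> M" if "v \<in> Bl" for v
        unfolding f_def using that theI'[OF ex1[OF that]] by simp
      have fW: "f v \<in> Wh" if "v \<in> Bl" for v using edge_bw(1)[OF bip _ that] fM[OF that] ME by blast
      have fe: "f \<in> Bl \<rightarrow>\<^sub>E Wh" using fW unfolding f_def by (auto simp: PiE_iff)
      have finj: "inj_on f Bl"
      proof (rule inj_onI)
        fix v v' assume vv: "v \<in> Bl" "v' \<in> Bl" "f v = f v'"
        have "f v \<in> V" using fW[OF vv(1)] bf(3) by auto
        moreover have "{v, f v} \<in> M \<and> f v \<in> {v, f v}" using fM[OF vv(1)] by blast
        moreover have "{v', f v'} \<in> M \<and> f v \<in> {v', f v'}" using fM[OF vv(2)] vv(3) by blast
        ultimately have "{v, f v} = {v', f v'}" using uniq by blast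
        moreover have "v \<noteq> f v'" using fW[OF vv(2)] vv(1) bf(2) by auto
        ultimately show "v = v'" by (auto simp: doubleton_eq_iff)
      qed
      have fim: "f ` Bl = Wh"
      proof
        show "f ` Bl \<subseteq> Wh" using fW by auto
        show "Wh \<subseteq> f ` Bl"
        proof
          fix x assume x: "x \<in> Wh"
          obtain e where e: "e \<in> M" "x \<in> e" using uniq[of x] x bf(3) by auto
          obtain p q where pq: "p \<in> Bl" "q \<in> Wh" "e = {p, q}" using edge_split[OF bip] e ME by blast
          have "x \<noteq> p" using pq x bf(2) by auto
          then have "x = q" using e pq by auto
          then have "f p = x" using un[OF pq(1) fM[OF pq(1)]] e pq by auto
          then show "x \<in> f ` Bl" using pq by auto
        qed
      qed
      have fn: "\<forall>v\<in>Bl. f v \<in> nb E v" using fM ME unfolding nb_def by auto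
      have fF: "f \<in> ?F" using fe finj fim fn unfolding pset_def bij_betw_def by auto
      have "\<Phi> f = M"
      proof
        show "\<Phi> f \<subseteq> M" using fM unfolding \<Phi>_def by auto
        show "M \<subseteq> \<Phi> f"
        proof
          fix e assume e: "e \<in> M"
          obtain p q where pq: "p \<in> Bl" "q \<in> Wh" "e = {p, q}" using edge_split[OF bip] e ME by blast
          have "f p = q" using un[OF pq(1) fM[OF pq(1)]] e pq by auto
          then show "e \<in> \<Phi> f" using pq unfolding \<Phi>_def by auto
        qed
      qed
      then show "M \<in> \<Phi> ` ?F" using fF by auto
    qed
  qed
  have "num_pm V E = card (\<Phi> ` ?F)" unfolding num_pm_def img ..
  also have "\<dots> = card ?F" using inj by (rule card_image)
  finally show ?thesis unfolding pcount_def .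
qed

theorem theorem5p7:
  fixes V :: "'a set" and E :: "'a set set" and Bl Wh :: "'a set"
    and n :: nat and b w :: "nat \<Rightarrow> 'a" and B :: "nat \<Rightarrow> 'a set"
  assumes bip: "bipartite_graph V E Bl Wh"
    and edges: "\<forall>i<n. {b i, w i} \<in> E"
    and black: "\<forall>i<n. b i \<in> Bl" and white: "\<forall>i<n. w i \<in> Wh"
    and disj_b: "inj_on b {..<n}" and disj_w: "inj_on w {..<n}"
    and chan: "\<forall>i<n. B i \<in> black_channels V (E - {{b j, w j} | j. j < n}) Bl
                      \<and> B i \<noteq> {} \<and> B i \<inter> b ` {..<n} \<subseteq> {b i}"
  shows "num_pm V E mod 2
           = num_pm (V - (b ` {..<n} \<union> w ` {..<n})) (del_vertices_edges E (b ` {..<n} \<union> w ` {..<n})) mod 2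
         \<and> ((\<forall>i<n. B i \<inter> b ` {..<n} = {b i}) \<longrightarrow>
             card (black_channels V E Bl)
             = card (black_channels (V - (b ` {..<n} \<union> w ` {..<n}))
                       (del_vertices_edges E (b ` {..<n} \<union> w ` {..<n}))
                       (Bl - b ` {..<n})))"
proof -
  let ?bS = "b ` {..<n}" and ?wS = "w ` {..<n}"
  let ?S = "b ` {..<n} \<union> w ` {..<n}"
  let ?Ee = "E - {{b j, w j} | j. j < n}"
  let ?N = "nb E"
  note bf = bip_facts[OF bip]
  have bSB: "?bS \<subseteq> Bl" using black by auto
  have wSW: "?wS \<subseteq> Wh" using white by auto
  have bipe: "bipartite_graph V ?Ee Bl Wh"
    using bip unfolding bipartite_graph_def simple_graph_def by blast
  have bip': "bipartite_graph (V - ?S) (del_vertices_edges E ?S) (Bl - ?bS) (Wh - ?wS)"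
  proof -
    have sg: "simple_graph V E" and col: "\<forall>e\<in>E. \<exists>x\<in>Bl. \<exists>y\<in>Wh. e = {x, y}"
      using bip unfolding bipartite_graph_def by auto
    have "simple_graph (V - ?S) (del_vertices_edges E ?S)"
      unfolding simple_graph_def
    proof (intro conjI ballI)
      show "finite (V - ?S)" using bf(1) by simp
      fix e assume "e \<in> del_vertices_edges E ?S"
      then have e: "e \<in> E" "e \<inter> ?S = {}" unfolding del_vertices_edges_def by auto
      then obtain x y where "x \<in> V" "y \<in> V" "x \<noteq> y" "e = {x, y}" using sg unfolding simple_graph_def by blast
      then show "\<exists>x y. x \<in> V - ?S \<and> y \<in> V - ?S \<and> x \<noteq> y \<and> e = {x, y}" using e(2) by blast
    qed
    moreover have "(Bl - ?bS) \<inter> (Wh - ?wS) = {}" using bf(2) by blast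
    moreover have "(Bl - ?bS) \<union> (Wh - ?wS) = V - ?S" using bf(2,3) bSB wSW by blast
    moreover have "\<forall>e\<in>del_vertices_edges E ?S. \<exists>x\<in>Bl - ?bS. \<exists>y\<in>Wh - ?wS. e = {x, y}"
    proof
      fix e assume "e \<in> del_vertices_edges E ?S"
      then have e: "e \<in> E" "e \<inter> ?S = {}" unfolding del_vertices_edges_def by auto
      then obtain x y where "x \<in> Bl" "y \<in> Wh" "e = {x, y}" using col by blast
      then show "\<exists>x\<in>Bl - ?bS. \<exists>y\<in>Wh - ?wS. e = {x, y}" using e(2) by blast
    qed
    ultimately show ?thesis unfolding bipartite_graph_def by blast
  qed
  have nbdel: "nb (del_vertices_edges E ?S) u \<inter> (Wh - ?wS) = nb E u \<inter> (Wh - ?wS)"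
    if u: "u \<in> Bl - ?bS" for u
  proof -
    have "u \<notin> ?S" using u wSW bf(2) by blast
    moreover have "x \<notin> ?S" if "x \<in> Wh - ?wS" for x using that bSB bf(2) by blast
    ultimately show ?thesis unfolding nb_def del_vertices_edges_def by auto
  qed
  have Npar: "\<forall>x\<in>Wh. even (card {u\<in>B i. x \<in> (?N(b i := ?N (b i) - {w i})) u})" if i: "i < n" for i
  proof -
    have Bi: "B i \<in> black_channels V ?Ee Bl" "B i \<inter> ?bS \<subseteq> {b i}" using chan i by auto
    have k: "kern (nb ?Ee) Bl Wh (B i)" using channels_kern[OF bipe] Bi(1) by auto
    have BiB: "B i \<subseteq> Bl" using Bi(1) unfolding black_channels_def by auto
    have "kern (nb ?Ee) Bl Wh (B i) = kern (?N(b i := ?N (b i) - {w i})) Bl Wh (B i)"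
    proof (rule kern_cong)
      fix u assume u: "u \<in> B i"
      show "nb ?Ee u \<inter> Wh = (?N(b i := ?N (b i) - {w i})) u \<inter> Wh"
      proof (cases "u = b i")
        case True
        have key: "({b i, x} \<in> {{b j, w j} | j. j < n}) \<longleftrightarrow> x = w i" if x: "x \<in> Wh" for x
        proof
          assume "{b i, x} \<in> {{b j, w j} | j. j < n}"
          then obtain j where j: "j < n" "{b i, x} = {b j, w j}" by blast
          have "(b i = b j \<and> x = w j) \<or> (b i = w j \<and> x = b j)" by (rule doubleton_eq_iff[THEN iffD1, OF j(2)])
          moreover have "b i \<noteq> w j"
          proof
            assume "b i = w j"
            have bi: "b i \<in> Bl" using black i by blast
            have wj: "w j \<in> Wh" using white j(1) by blast
            have "w j \<in> Bl \<inter> Wh" using bi wj \<open>b i = w j\<close> by simp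
            then show False using bf(2) by simp
          qed
          ultimately have "b i = b j" "x = w j" by auto
          then have "i = j" using disj_b i j(1) by (auto dest: inj_onD)
          then show "x = w i" using \<open>x = w j\<close> by simp
        next
          assume "x = w i"
          then show "{b i, x} \<in> {{b j, w j} | j. j < n}" using i by auto
        qed
        show ?thesis
        proof (rule set_eqI)
          fix x
          have "x \<in> nb ?Ee u \<longleftrightarrow> {b i, x} \<in> E \<and> {b i, x} \<notin> {{b j, w j} | j. j < n}"
            unfolding nb_def True by simp
          moreover have "x \<in> (?N(b i := ?N (b i) - {w i})) u \<longleftrightarrow> {b i, x} \<in> E \<and> x \<noteq> w i"
            unfolding nb_def True by simp
          ultimately show "x \<in> nb ?Ee u \<inter> Wh \<longleftrightarrow> x \<in> (?N(b i := ?N (b i) - {w i})) u \<inter> Wh"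
            using key[of x] by blast
        qed
      next
        case False
        have unb: "u \<notin> ?bS" using False u Bi(2) by auto
        have uBl: "u \<in> Bl" using u BiB by auto
        have "{u, x} \<notin> {{b j, w j} | j. j < n}" for x
        proof
          assume "{u, x} \<in> {{b j, w j} | j. j < n}"
          then obtain j where j: "j < n" "{u, x} = {b j, w j}" by blast
          then have "u = b j \<or> u = w j" using doubleton_eq_iff[THEN iffD1, OF j(2)] by blast
          moreover have "u \<noteq> b j" using unb j(1) by auto
          moreover have "u \<noteq> w j"
          proof
            assume "u = w j"
            have wj: "w j \<in> Wh" using white j(1) by blast
            have "w j \<in> Bl \<inter> Wh" using uBl wj \<open>u = w j\<close> by simp
            then show False using bf(2) by simp
          qed
          ultimately show False by blast
        qed
        then have "nb ?Ee u = nb E u" unfolding nb_def by blast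
        then show ?thesis using False by simp
      qed
    qed
    then have "kern (?N(b i := ?N (b i) - {w i})) Bl Wh (B i)" using k by simp
    then show ?thesis unfolding kern_def by blast
  qed
  have hyp1: "\<forall>i<n. b i \<in> Bl \<and> w i \<in> Wh \<and> w i \<in> ?N (b i)"
    using black white edges unfolding nb_def by auto
  have BiB: "B i \<subseteq> Bl" if "i < n" for i using chan that unfolding black_channels_def by auto
  have part1: "num_pm V E mod 2 = num_pm (V - ?S) (del_vertices_edges E ?S) mod 2"
  proof -
    have "num_pm V E mod 2 = pcount Bl Wh ?N mod 2" using num_pm_pcount[OF bip] by simp
    also have "\<dots> = pcount (Bl - ?bS) (Wh - ?wS) ?N mod 2"
    proof (rule pcount_multi[OF bf(4,5) hyp1 disj_b disj_w])
      show "\<forall>i<n. B i \<subseteq> Bl \<and> B i \<noteq> {} \<and> B i \<inter> ?bS \<subseteq> {b i} \<and>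
           (\<forall>x\<in>Wh. even (card {u\<in>B i. x \<in> (?N(b i := ?N (b i) - {w i})) u}))"
        using BiB chan Npar by blast
    qed
    also have "pcount (Bl - ?bS) (Wh - ?wS) ?N = pcount (Bl - ?bS) (Wh - ?wS) (nb (del_vertices_edges E ?S))"
      using nbdel by (intro pcount_cong) auto
    also have "\<dots> = num_pm (V - ?S) (del_vertices_edges E ?S)" using num_pm_pcount[OF bip'] by simp
    finally show ?thesis .
  qed
  have part2: "card (black_channels V E Bl)
             = card (black_channels (V - ?S) (del_vertices_edges E ?S) (Bl - ?bS))"
    if all: "\<forall>i<n. B i \<inter> ?bS = {b i}"
  proof -
    have "card (black_channels V E Bl) = card {C. kern ?N Bl Wh C}" using channels_kern[OF bip] by simp
    also have "\<dots> = card {C. kern ?N (Bl - ?bS) (Wh - ?wS) C}"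
    proof (rule kern_multi[OF bf(4,5) hyp1 disj_b disj_w])
      show "\<forall>i<n. B i \<subseteq> Bl \<and> b i \<in> B i \<and> B i \<inter> ?bS \<subseteq> {b i} \<and>
           (\<forall>x\<in>Wh. even (card {u\<in>B i. x \<in> (?N(b i := ?N (b i) - {w i})) u}))"
        using BiB all Npar by blast
    qed
    also have "{C. kern ?N (Bl - ?bS) (Wh - ?wS) C} = {C. kern (nb (del_vertices_edges E ?S)) (Bl - ?bS) (Wh - ?wS) C}"
      using nbdel by (intro Collect_cong kern_cong2) auto
    also have "\<dots> = black_channels (V - ?S) (del_vertices_edges E ?S) (Bl - ?bS)"
      using channels_kern[OF bip'] by simp
    finally show ?thesis .
  qed
  show ?thesis using part1 part2 by blast
qed

end
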